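(* Let $n\ge 2$. Then $\mathrm{B}=\Gamma^{\overline{03}}=\Gamma^{\overline{12}}$, where for a subspace $L\subseteq\mathrm{C}$ we write $\Gamma^{L}=\{T\in\mathrm{C}^\times: T L T^{-1}\subseteq L\}$.
   Context: Let $\mathrm{C}$ be either the real Clifford algebra $C\ell_{p,q}$ with $p+q=n$, or the complex Clifford algebra $C\ell(\mathbb{C}^n)$. It has identity $e$ and generators $e_1,\dots,e_n$ satisfying $e_ae_b+e_be_a=2\eta_{ab}e$. In the real case $\eta=\mathrm{diag}(1,\dots,1,-1,\dots,-1)$ with $p$ entries $+1$ and $q$ entries $-1$. In the complex case $\eta=I_n$. $\mathrm{C}^k$ is the grade-$k$ subspace, spanned by the products $e_{a_1}\cdots e_{a_k}$ with $a_1<\dots<a_k$. The grade involution $U\mapsto\hat U$ is the linear automorphism acting on $\mathrm{C}^k$ as $(-1)^k$. The reversion $U\mapsto\tilde U$ is the linear anti-automorphism acting on $\mathrm{C}^k$ as $(-1)^{k(k-1)/2}$. For $m=0,1,2,3$ let $\mathrm{C}^{\overline m}=\bigoplus_{k\equiv m \pmod 4}\mathrm{C}^k$, and $\mathrm{C}^{\overline{kl}}=\mathrm{C}^{\overline k}\oplus\mathrm{C}^{\overline l}$. $\Gamma^{\overline{kl}}$ denotes $\Gamma^L$ with $L=\mathrm{C}^{\overline{kl}}$. $\mathrm{C}^\times$ is the group of invertible elements. $\mathrm{Z}$ is the center: $\mathrm{Z}=\mathrm{C}^0$ for $n$ even and $\mathrm{Z}=\mathrm{C}^0\oplus\mathrm{C}^n$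 for $n$ odd. $\mathrm{Z}^\times$ is the set of invertible elements of $\mathrm{Z}$. Define $\mathrm{B}:=\{T\in\mathrm{C}^\times:\ \hat{\tilde T} T\in\mathrm{Z}^\times\}$. *)

theory Defs
  imports Complex_Main
begin

text \<open>Clifford algebra with n generators and diagonal signature s (s i = e_i squared, a scalar).
  Elements are coefficient functions on finite subsets of the index set {..<n}; the subset
  A = {a1<...<ak} stands for the basis blade e_{a1}...e_{ak}.\<close>

definition cl_carrier :: "nat \<Rightarrow> (nat set \<Rightarrow> 'a::field) set" where
  "cl_carrier n = {U. \<forall>A. U A \<noteq> 0 \<longrightarrow> A \<subseteq> {..<n}}"

definition blade_coef :: "(nat \<Rightarrow> 'a::field) \<Rightarrow> nat set \<Rightarrow> nat set \<Rightarrow> 'a" where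
  "blade_coef s A B =
     (-1) ^ card {(a, b). a \<in> A \<and> b \<in> B \<and> b < a} * (\<Prod>i\<in>A \<inter> B. s i)"

definition cl_mult :: "nat \<Rightarrow> (nat \<Rightarrow> 'a::field) \<Rightarrow> (nat set \<Rightarrow> 'a) \<Rightarrow> (nat set \<Rightarrow> 'a) \<Rightarrow> (nat set \<Rightarrow> 'a)" where
  "cl_mult n s U V = (\<lambda>C. \<Sum>A\<in>Pow {..<n}. \<Sum>B\<in>Pow {..<n}.
      if (A - B) \<union> (B - A) = C then U A * V B * blade_coef s A B else 0)"

definition cl_one :: "nat set \<Rightarrow> 'a::field" where
  "cl_one = (\<lambda>A. if A = {} then 1 else 0)"

definition cl_hat :: "(nat set \<Rightarrow> 'a::field) \<Rightarrow> (nat set \<Rightarrow> 'a)" where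
  "cl_hat U = (\<lambda>A. (-1) ^ card A * U A)"

definition cl_tilde :: "(nat set \<Rightarrow> 'a::field) \<Rightarrow> (nat set \<Rightarrow> 'a)" where
  "cl_tilde U = (\<lambda>A. (-1) ^ (card A * (card A - 1) div 2) * U A)"

definition cl_units :: "nat \<Rightarrow> (nat \<Rightarrow> 'a::field) \<Rightarrow> (nat set \<Rightarrow> 'a) set" where
  "cl_units n s = {T \<in> cl_carrier n. \<exists>V \<in> cl_carrier n.
      cl_mult n s T V = cl_one \<and> cl_mult n s V T = cl_one}"

definition cl_inv :: "nat \<Rightarrow> (nat \<Rightarrow> 'a::field) \<Rightarrow> (nat set \<Rightarrow> 'a) \<Rightarrow> (nat set \<Rightarrow> 'a)" where
  "cl_inv n s T = (SOME V. V \<in> cl_carrier n \<and> cl_mult n s T V = cl_one \<and> cl_mult n s V T = cl_one)"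

definition cl_center :: "nat \<Rightarrow> (nat set \<Rightarrow> 'a::field) set" where
  "cl_center n = {U \<in> cl_carrier n. \<forall>A. U A \<noteq> 0 \<longrightarrow> A = {} \<or> (odd n \<and> A = {..<n})}"

definition cl_center_units :: "nat \<Rightarrow> (nat \<Rightarrow> 'a::field) \<Rightarrow> (nat set \<Rightarrow> 'a) set" where
  "cl_center_units n s = cl_center n \<inter> cl_units n s"

definition cl_grades_mod4 :: "nat \<Rightarrow> nat \<Rightarrow> nat \<Rightarrow> (nat set \<Rightarrow> 'a::field) set" where
  "cl_grades_mod4 n k l = {U \<in> cl_carrier n. \<forall>A. U A \<noteq> 0 \<longrightarrow> card A mod 4 = k \<or> card A mod 4 = l}"

definition cl_Gamma :: "nat \<Rightarrow> (nat \<Rightarrow> 'a::field) \<Rightarrow> (nat set \<Rightarrow> 'a) set \<Rightarrow> (nat set \<Rightarrow> 'a) set" where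
  "cl_Gamma n s L = {T \<in> cl_units n s. \<forall>U \<in> L. cl_mult n s (cl_mult n s T U) (cl_inv n s T) \<in> L}"

definition cl_B :: "nat \<Rightarrow> (nat \<Rightarrow> 'a::field) \<Rightarrow> (nat set \<Rightarrow> 'a) set" where
  "cl_B n s = {T \<in> cl_units n s. cl_mult n s (cl_hat (cl_tilde T)) T \<in> cl_center_units n s}"

text \<open>signatures: real Cl_{p,q} (first p generators square to 1, next q to -1); complex: all 1\<close>
definition real_sig :: "nat \<Rightarrow> nat \<Rightarrow> real" where
  "real_sig p i = (if i < p then 1 else -1)"

definition complex_sig :: "nat \<Rightarrow> complex" where
  "complex_sig i = 1"

end

theory Submission
  imports Defs
begin


definition sd :: "nat set \<Rightarrow> nat set \<Rightarrow> nat set" where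
  "sd A B = (A - B) \<union> (B - A)"

definition NN :: "nat set \<Rightarrow> nat set \<Rightarrow> nat" where
  "NN A B = card {(a, b). a \<in> A \<and> b \<in> B \<and> b < a}"

lemma card_filter_sum: "finite B \<Longrightarrow> card {b\<in>B. P b} = (\<Sum>b\<in>B. if P b then 1 else 0)"
  by (simp add: sum.If_cases Collect_conj_eq Int_commute)

lemma NN_sum: assumes "finite A" "finite B"
  shows "NN A B = (\<Sum>a\<in>A. \<Sum>b\<in>B. if b < a then 1 else 0)"
proof -
  have "{(a, b). a \<in> A \<and> b \<in> B \<and> b < a} = Sigma A (\<lambda>a. {b\<in>B. b < a})" by auto
  hence "NN A B = (\<Sum>a\<in>A. card {b\<in>B. b < a})"
    unfolding NN_def using assms by (simp add: card_SigmaI)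
  thus ?thesis using assms by (simp add: card_filter_sum)
qed

lemma sign_sd: assumes "finite X" "finite Y"
  shows "(-1::'a::comm_ring_1) ^ (sum f (sd X Y)) = (-1) ^ (sum f X) * (-1) ^ (sum f Y)"
proof -
  have d: "sum f (sd X Y) = sum f (X - Y) + sum f (Y - X)"
    unfolding sd_def using assms by (subst sum.union_disjoint) auto
  have x: "sum f X = sum f (X - Y) + sum f (X \<inter> Y)"
    using assms by (metis add.commute sum.Int_Diff)
  have y: "sum f Y = sum f (Y - X) + sum f (X \<inter> Y)"
    using assms by (metis Int_commute add.commute sum.Int_Diff)
  have "(-1::'a) ^ (sum f X) * (-1) ^ (sum f Y) = (-1) ^ (sum f (sd X Y) + 2 * sum f (X \<inter> Y))"
  proof -
    have "sum f X + sum f Y = sum f (sd X Y) + 2 * sum f (X \<inter> Y)" by (simp add: x y d)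
    thus ?thesis by (simp add: power_add[symmetric])
  qed
  also have "\<dots> = (-1) ^ (sum f (sd X Y))" by (simp add: power_add power_mult)
  finally show ?thesis by simp
qed

lemma finite_sd: "finite A \<Longrightarrow> finite B \<Longrightarrow> finite (sd A B)" by (simp add: sd_def)

lemma NN_sd1: assumes "finite A" "finite B" "finite D"
  shows "(-1::'a::comm_ring_1) ^ NN (sd A B) D = (-1) ^ NN A D * (-1) ^ NN B D"
  using assms by (simp add: NN_sum finite_sd sign_sd)

lemma NN_sd2: assumes "finite A" "finite B" "finite D"
  shows "(-1::'a::comm_ring_1) ^ NN A (sd B D) = (-1) ^ NN A B * (-1) ^ NN A D"
proof -
  have "(-1::'a) ^ NN A (sd B D) = (\<Prod>a\<in>A. (-1) ^ (\<Sum>b\<in>sd B D. if b < a then 1 else 0))"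
    using assms by (simp add: NN_sum finite_sd power_sum)
  also have "\<dots> = (\<Prod>a\<in>A. (-1) ^ (\<Sum>b\<in>B. if b < a then 1 else 0) * (-1) ^ (\<Sum>b\<in>D. if b < a then 1 else 0))"
    using assms by (simp add: sign_sd)
  also have "\<dots> = (-1) ^ NN A B * (-1) ^ NN A D"
    using assms by (simp add: NN_sum power_sum prod.distrib)
  finally show ?thesis .
qed

lemma NN_swap: assumes "finite A" "finite B"
  shows "NN A B + NN B A + card (A \<inter> B) = card A * card B"
proof -
  let ?S1 = "{(a, b). a \<in> A \<and> b \<in> B \<and> b < a}"
  let ?S2 = "{(a, b). a \<in> A \<and> b \<in> B \<and> a < b}"
  let ?S3 = "{(a, b). a \<in> A \<and> b \<in> B \<and> a = b}"
  have fin: "finite (A \<times> B)" using assms by simp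
  have u: "A \<times> B = ?S1 \<union> ?S2 \<union> ?S3" by auto
  have c2: "card ?S2 = NN B A"
  proof -
    have "?S2 = (\<lambda>(x,y). (y,x)) ` {(a, b). a \<in> B \<and> b \<in> A \<and> b < a}" by auto
    moreover have "inj_on (\<lambda>(x,y). (y,x)) {(a, b). a \<in> B \<and> b \<in> A \<and> b < a}"
      by (auto simp: inj_on_def)
    ultimately show ?thesis unfolding NN_def by (simp add: card_image)
  qed
  have c3: "card ?S3 = card (A \<inter> B)"
  proof -
    have "?S3 = (\<lambda>x. (x,x)) ` (A \<inter> B)" by auto
    thus ?thesis by (simp add: card_image inj_on_def)
  qed
  have f1: "finite ?S1" by (rule finite_subset[OF _ fin]) auto
  have f2: "finite ?S2" by (rule finite_subset[OF _ fin]) auto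
  have f3: "finite ?S3" by (rule finite_subset[OF _ fin]) auto
  have d1: "?S1 \<inter> ?S2 = {}" by auto
  have d2: "(?S1 \<union> ?S2) \<inter> ?S3 = {}" by auto
  have "card (A \<times> B) = card ?S1 + card ?S2 + card ?S3"
    unfolding u using f1 f2 f3 d1 d2 by (simp add: card_Un_disjoint)
  thus ?thesis using c2 c3 by (simp add: NN_def card_cartesian_product)
qed

lemma blade_coef_alt: "blade_coef s A B = (-1) ^ NN A B * (\<Prod>i\<in>A \<inter> B. s i)"
  by (simp add: blade_coef_def NN_def)

lemma blade_coef_swap: assumes "finite A" "finite B"
  shows "blade_coef s A B = (-1) ^ (card A * card B + card (A \<inter> B)) * blade_coef s B A"
proof -
  have e: "card A * card B + card (A \<inter> B) = NN A B + NN B A + 2 * card (A \<inter> B)"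
    using NN_swap[OF assms] by simp
  show ?thesis unfolding blade_coef_alt e
    by (simp add: power_add power_mult Int_commute mult.assoc[symmetric])
qed

lemma prod_ind: assumes "finite U" "X \<subseteq> U"
  shows "prod s X = (\<Prod>i\<in>U. if i \<in> X then s i else 1)"
  using assms by (simp add: prod.If_cases Int_absorb1 Int_commute)

lemma prod_cocycle: assumes "finite A" "finite B" "finite D"
  shows "prod (s::nat \<Rightarrow> 'a::comm_monoid_mult) (A \<inter> B) * prod s (sd A B \<inter> D) = prod s (B \<inter> D) * prod s (A \<inter> sd B D)"
proof -
  let ?U = "A \<union> B \<union> D"
  have f: "finite ?U" using assms by simp
  have "prod s (A \<inter> B) * prod s (sd A B \<inter> D) =
     (\<Prod>i\<in>?U. (if i \<in> A \<inter> B then s i else 1) * (if i \<in> sd A B \<inter> D then s i else 1))"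
    by (subst prod_ind[OF f, of "A \<inter> B"], blast, subst prod_ind[OF f, of "sd A B \<inter> D"],
        auto simp: sd_def prod.distrib)
  also have "\<dots> = (\<Prod>i\<in>?U. (if i \<in> B \<inter> D then s i else 1) * (if i \<in> A \<inter> sd B D then s i else 1))"
    by (rule prod.cong) (auto simp: sd_def)
  also have "\<dots> = prod s (B \<inter> D) * prod s (A \<inter> sd B D)"
    by (subst prod_ind[OF f, of "B \<inter> D"], blast, subst prod_ind[OF f, of "A \<inter> sd B D"],
        auto simp: sd_def prod.distrib)
  finally show ?thesis .
qed

lemma blade_coef_cocycle: assumes "finite A" "finite B" "finite D"
  shows "blade_coef s A B * blade_coef s (sd A B) D = blade_coef s B D * blade_coef s A (sd B D)"
proof -
  have "blade_coef s A B * blade_coef s (sd A B) D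
     = ((-1) ^ NN A B * (-1) ^ NN A D * (-1) ^ NN B D) * (prod s (A \<inter> B) * prod s (sd A B \<inter> D))"
    unfolding blade_coef_alt NN_sd1[OF assms] by (simp add: algebra_simps)
  also have "\<dots> = ((-1) ^ NN A B * (-1) ^ NN A D * (-1) ^ NN B D) * (prod s (B \<inter> D) * prod s (A \<inter> sd B D))"
    using prod_cocycle[OF assms] by simp
  also have "\<dots> = blade_coef s B D * blade_coef s A (sd B D)"
    unfolding blade_coef_alt NN_sd2[OF assms] by (simp add: algebra_simps)
  finally show ?thesis .
qed



lemma swap4: "(\<Sum>C\<in>P. \<Sum>D\<in>P. \<Sum>A\<in>P. \<Sum>B\<in>P. g A B C D) = (\<Sum>A\<in>P. \<Sum>B\<in>P. \<Sum>D\<in>P. \<Sum>C\<in>P. (g A B C D :: 'a::comm_monoid_add))"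
proof -
  have "(\<Sum>C\<in>P. \<Sum>D\<in>P. \<Sum>A\<in>P. \<Sum>B\<in>P. g A B C D) = (\<Sum>C\<in>P. \<Sum>A\<in>P. \<Sum>D\<in>P. \<Sum>B\<in>P. g A B C D)"
    by (rule sum.cong[OF refl], rule sum.swap)
  also have "\<dots> = (\<Sum>C\<in>P. \<Sum>A\<in>P. \<Sum>B\<in>P. \<Sum>D\<in>P. g A B C D)"
    by (rule sum.cong[OF refl], rule sum.cong[OF refl], rule sum.swap)
  also have "\<dots> = (\<Sum>A\<in>P. \<Sum>C\<in>P. \<Sum>B\<in>P. \<Sum>D\<in>P. g A B C D)"
    by (rule sum.swap)
  also have "\<dots> = (\<Sum>A\<in>P. \<Sum>B\<in>P. \<Sum>C\<in>P. \<Sum>D\<in>P. g A B C D)"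
    by (rule sum.cong[OF refl], rule sum.swap)
  also have "\<dots> = (\<Sum>A\<in>P. \<Sum>B\<in>P. \<Sum>D\<in>P. \<Sum>C\<in>P. g A B C D)"
    by (rule sum.cong[OF refl], rule sum.cong[OF refl], rule sum.swap)
  finally show ?thesis .
qed

lemma swap4': "(\<Sum>A\<in>P. \<Sum>C\<in>P. \<Sum>B\<in>P. \<Sum>D\<in>P. g A B C D) = (\<Sum>A\<in>P. \<Sum>B\<in>P. \<Sum>D\<in>P. \<Sum>C\<in>P. (g A B C D :: 'a::comm_monoid_add))"
proof -
  have "(\<Sum>A\<in>P. \<Sum>C\<in>P. \<Sum>B\<in>P. \<Sum>D\<in>P. g A B C D) = (\<Sum>A\<in>P. \<Sum>B\<in>P. \<Sum>C\<in>P. \<Sum>D\<in>P. g A B C D)"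
    by (rule sum.cong[OF refl], rule sum.swap)
  also have "\<dots> = (\<Sum>A\<in>P. \<Sum>B\<in>P. \<Sum>D\<in>P. \<Sum>C\<in>P. g A B C D)"
    by (rule sum.cong[OF refl], rule sum.cong[OF refl], rule sum.swap)
  finally show ?thesis .
qed

lemma sum_delta_conj: assumes "a \<in> S" "finite S"
  shows "(\<Sum>C\<in>S. if a = C \<and> P C then f C else 0) = (if P a then f a else (0::'b::comm_monoid_add))"
proof -
  have "(\<Sum>C\<in>S. if a = C \<and> P C then f C else 0) = (\<Sum>C\<in>S. if a = C then (if P a then f a else 0) else 0)"
    by (rule sum.cong) auto
  thus ?thesis using assms by (simp add: sum.delta)
qed

abbreviation PP :: "nat \<Rightarrow> nat set set" where "PP n \<equiv> Pow {..<n}"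

lemma cl_mult_sd: "cl_mult n s U V C = (\<Sum>A\<in>PP n. \<Sum>B\<in>PP n. if sd A B = C then U A * V B * blade_coef s A B else 0)"
  by (simp add: cl_mult_def sd_def)

lemma sd_PP: "A \<in> PP n \<Longrightarrow> B \<in> PP n \<Longrightarrow> sd A B \<in> PP n" by (auto simp: sd_def)

lemma fin_PP: "A \<in> PP n \<Longrightarrow> finite A" by (auto intro: finite_subset)

lemma mult_left_expand:
  "cl_mult n s (cl_mult n s U V) W E = (\<Sum>A\<in>PP n. \<Sum>B\<in>PP n. \<Sum>D\<in>PP n.
     if sd (sd A B) D = E then U A * V B * W D * (blade_coef s A B * blade_coef s (sd A B) D) else 0)"
proof -
  have "cl_mult n s (cl_mult n s U V) W E = (\<Sum>C\<in>PP n. \<Sum>D\<in>PP n. \<Sum>A\<in>PP n. \<Sum>B\<in>PP n.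
     if sd A B = C \<and> sd C D = E then U A * V B * W D * (blade_coef s A B * blade_coef s C D) else 0)"
    unfolding cl_mult_sd
  proof (intro sum.cong refl)
    fix C D
    show "(if sd C D = E then (\<Sum>A\<in>PP n. \<Sum>B\<in>PP n. if sd A B = C then U A * V B * blade_coef s A B else 0) * W D * blade_coef s C D else 0)
      = (\<Sum>A\<in>PP n. \<Sum>B\<in>PP n. if sd A B = C \<and> sd C D = E then U A * V B * W D * (blade_coef s A B * blade_coef s C D) else 0)"
    proof (cases "sd C D = E")
      case True
      have "(\<Sum>A\<in>PP n. \<Sum>B\<in>PP n. if sd A B = C then U A * V B * blade_coef s A B else 0) * W D * blade_coef s C D
        = (\<Sum>A\<in>PP n. \<Sum>B\<in>PP n. (if sd A B = C then U A * V B * blade_coef s A B else 0) * (W D * blade_coef s C D))"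
        by (simp add: sum_distrib_right mult.assoc)
      also have "\<dots> = (\<Sum>A\<in>PP n. \<Sum>B\<in>PP n. if sd A B = C \<and> sd C D = E then U A * V B * W D * (blade_coef s A B * blade_coef s C D) else 0)"
        using True by (intro sum.cong refl) (simp add: mult_ac)
      finally show ?thesis using True by simp
    qed simp
  qed
  also have "\<dots> = (\<Sum>A\<in>PP n. \<Sum>B\<in>PP n. \<Sum>D\<in>PP n. \<Sum>C\<in>PP n.
     if sd A B = C \<and> sd C D = E then U A * V B * W D * (blade_coef s A B * blade_coef s C D) else 0)"
    by (rule swap4)
  also have "\<dots> = (\<Sum>A\<in>PP n. \<Sum>B\<in>PP n. \<Sum>D\<in>PP n.
     if sd (sd A B) D = E then U A * V B * W D * (blade_coef s A B * blade_coef s (sd A B) D) else 0)"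
  proof (intro sum.cong refl)
    fix A B D assume "A \<in> PP n" "B \<in> PP n"
    hence m: "sd A B \<in> PP n" by (rule sd_PP)
    show "(\<Sum>C\<in>PP n. if sd A B = C \<and> sd C D = E then U A * V B * W D * (blade_coef s A B * blade_coef s C D) else 0)
      = (if sd (sd A B) D = E then U A * V B * W D * (blade_coef s A B * blade_coef s (sd A B) D) else 0)"
      using m by (simp add: sum_delta_conj)
  qed
  finally show ?thesis .
qed



lemma mult_right_expand:
  "cl_mult n s U (cl_mult n s V W) E = (\<Sum>A\<in>PP n. \<Sum>B\<in>PP n. \<Sum>D\<in>PP n.
     if sd A (sd B D) = E then U A * V B * W D * (blade_coef s B D * blade_coef s A (sd B D)) else 0)"
proof -
  have "cl_mult n s U (cl_mult n s V W) E = (\<Sum>A\<in>PP n. \<Sum>C\<in>PP n. \<Sum>B\<in>PP n. \<Sum>D\<in>PP n.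
     if sd B D = C \<and> sd A C = E then U A * V B * W D * (blade_coef s B D * blade_coef s A C) else 0)"
    unfolding cl_mult_sd
  proof (intro sum.cong refl)
    fix A C
    show "(if sd A C = E then U A * (\<Sum>B\<in>PP n. \<Sum>D\<in>PP n. if sd B D = C then V B * W D * blade_coef s B D else 0) * blade_coef s A C else 0)
      = (\<Sum>B\<in>PP n. \<Sum>D\<in>PP n. if sd B D = C \<and> sd A C = E then U A * V B * W D * (blade_coef s B D * blade_coef s A C) else 0)"
    proof (cases "sd A C = E")
      case True
      have "U A * (\<Sum>B\<in>PP n. \<Sum>D\<in>PP n. if sd B D = C then V B * W D * blade_coef s B D else 0) * blade_coef s A C
        = (\<Sum>B\<in>PP n. \<Sum>D\<in>PP n. U A * (if sd B D = C then V B * W D * blade_coef s B D else 0) * blade_coef s A C)"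
        by (simp add: sum_distrib_right sum_distrib_left)
      also have "\<dots> = (\<Sum>B\<in>PP n. \<Sum>D\<in>PP n. if sd B D = C \<and> sd A C = E then U A * V B * W D * (blade_coef s B D * blade_coef s A C) else 0)"
        using True by (intro sum.cong refl) (simp add: mult_ac)
      finally show ?thesis using True by simp
    qed simp
  qed
  also have "\<dots> = (\<Sum>A\<in>PP n. \<Sum>B\<in>PP n. \<Sum>D\<in>PP n. \<Sum>C\<in>PP n.
     if sd B D = C \<and> sd A C = E then U A * V B * W D * (blade_coef s B D * blade_coef s A C) else 0)"
    by (rule swap4')
  also have "\<dots> = (\<Sum>A\<in>PP n. \<Sum>B\<in>PP n. \<Sum>D\<in>PP n.
     if sd A (sd B D) = E then U A * V B * W D * (blade_coef s B D * blade_coef s A (sd B D)) else 0)"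
  proof (intro sum.cong refl)
    fix A B D assume "B \<in> PP n" "D \<in> PP n"
    hence m: "sd B D \<in> PP n" by (rule sd_PP)
    show "(\<Sum>C\<in>PP n. if sd B D = C \<and> sd A C = E then U A * V B * W D * (blade_coef s B D * blade_coef s A C) else 0)
      = (if sd A (sd B D) = E then U A * V B * W D * (blade_coef s B D * blade_coef s A (sd B D)) else 0)"
      using m by (simp add: sum_delta_conj)
  qed
  finally show ?thesis .
qed

lemma sd_assoc: "sd (sd A B) D = sd A (sd B D)" by (auto simp: sd_def)

lemma cl_mult_assoc: "cl_mult n s (cl_mult n s U V) W = cl_mult n s U (cl_mult n s V W)"
proof
  fix E
  show "cl_mult n s (cl_mult n s U V) W E = cl_mult n s U (cl_mult n s V W) E"
    unfolding mult_left_expand mult_right_expand sd_assoc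
    by (intro sum.cong refl) (simp add: blade_coef_cocycle fin_PP)
qed

lemma cl_mult_carrier: "cl_mult n s U V \<in> cl_carrier n"
  unfolding cl_carrier_def
proof (intro CollectI allI impI)
  fix C assume "cl_mult n s U V C \<noteq> 0"
  have "\<exists>A\<in>PP n. \<exists>B\<in>PP n. sd A B = C"
  proof (rule ccontr)
    assume "\<not> ?thesis"
    hence "cl_mult n s U V C = 0" unfolding cl_mult_sd by (intro sum.neutral ballI) auto
    thus False using \<open>cl_mult n s U V C \<noteq> 0\<close> by simp
  qed
  then obtain A B where "A \<in> PP n" "B \<in> PP n" "sd A B = C" by blast
  thus "C \<subseteq> {..<n}" using sd_PP by blast
qed

lemma blade_coef_empty1[simp]: "blade_coef s {} B = 1" by (simp add: blade_coef_def)
lemma blade_coef_empty2[simp]: "blade_coef s A {} = 1" by (simp add: blade_coef_def)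

lemma carrier_out: "U \<in> cl_carrier n \<Longrightarrow> \<not> C \<subseteq> {..<n} \<Longrightarrow> U C = 0"
  unfolding cl_carrier_def by blast

lemma cl_one_carrier: "cl_one \<in> cl_carrier n" by (simp add: cl_carrier_def cl_one_def)

lemma cl_one_left: assumes "U \<in> cl_carrier n" shows "cl_mult n s cl_one U = U"
proof
  fix C
  have "cl_mult n s cl_one U C = (\<Sum>A\<in>PP n. if A = {} then (\<Sum>B\<in>PP n. if sd {} B = C then U B else 0) else 0)"
    unfolding cl_mult_sd
  proof (rule sum.cong[OF refl])
    fix A
    show "(\<Sum>B\<in>PP n. if sd A B = C then cl_one A * U B * blade_coef s A B else 0) =
      (if A = {} then (\<Sum>B\<in>PP n. if sd {} B = C then U B else 0) else 0)"
    proof (cases "A = {}")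
      case True thus ?thesis by (simp, intro sum.cong refl) (simp add: cl_one_def)
    next
      case False thus ?thesis by (simp, intro sum.neutral) (simp add: cl_one_def)
    qed
  qed
  also have "\<dots> = (\<Sum>B\<in>PP n. if B = C then U B else 0)" by (simp add: sd_def)
  also have "\<dots> = U C" using carrier_out[OF assms] by (simp add: sum.delta')
  finally show "cl_mult n s cl_one U C = U C" .
qed

lemma cl_one_right: assumes "U \<in> cl_carrier n" shows "cl_mult n s U cl_one = U"
proof
  fix C
  have "cl_mult n s U cl_one C = (\<Sum>A\<in>PP n. if sd A {} = C then U A else 0)"
    unfolding cl_mult_sd
  proof (rule sum.cong[OF refl])
    fix A
    have "(\<Sum>B\<in>PP n. if sd A B = C then U A * cl_one B * blade_coef s A B else 0) =
      (\<Sum>B\<in>PP n. if B = {} then (if sd A {} = C then U A else 0) else 0)"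
      by (rule sum.cong[OF refl]) (simp add: cl_one_def)
    thus "(\<Sum>B\<in>PP n. if sd A B = C then U A * cl_one B * blade_coef s A B else 0) =
      (if sd A {} = C then U A else 0)" by simp
  qed
  also have "\<dots> = (\<Sum>A\<in>PP n. if A = C then U A else 0)" by (simp add: sd_def)
  also have "\<dots> = U C" using carrier_out[OF assms] by (simp add: sum.delta')
  finally show "cl_mult n s U cl_one C = U C" .
qed



definition TT :: "nat \<Rightarrow> nat" where "TT k = k * (k + 1) div 2"

lemma TT_Suc: "TT (Suc m) = TT m + Suc m"
proof -
  have "Suc m * (Suc m + 1) = m * (m + 1) + 2 * Suc m" by (simp add: algebra_simps)
  thus ?thesis unfolding TT_def by simp
qed

lemma TT_add: "TT (x + y) = TT x + TT y + x * y"
  by (induction y) (simp_all add: TT_Suc TT_def[of 0] algebra_simps)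

lemma TT_tilde: "k + k * (k - 1) div 2 = TT k"
proof (cases k)
  case 0 thus ?thesis by (simp add: TT_def)
next
  case (Suc m)
  have "TT m = Suc m * m div 2" unfolding TT_def by (simp add: algebra_simps)
  thus ?thesis using Suc TT_Suc[of m] by simp
qed

lemma neg_one_parity: "even (x + y) \<Longrightarrow> (-1::'a::ring_1) ^ x = (-1) ^ y"
  by (cases "even x") (auto simp: neg_one_even_power neg_one_odd_power)

definition bar :: "(nat set \<Rightarrow> 'a::field) \<Rightarrow> (nat set \<Rightarrow> 'a)" where
  "bar U = cl_hat (cl_tilde U)"

lemma bar_apply: "bar U A = (-1) ^ TT (card A) * U A"
  unfolding bar_def cl_hat_def cl_tilde_def TT_tilde[symmetric]
  by (simp add: power_add)

lemma bar_bar: "bar (bar U) = U"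
  by (rule ext) (simp add: bar_apply mult.assoc[symmetric] power_add[symmetric])

lemma sign_anti: assumes "finite A" "finite B"
  shows "(-1) ^ TT (card (sd A B)) * blade_coef s A B = (-1) ^ TT (card A) * (-1) ^ TT (card B) * blade_coef s B A"
proof -
  define a where "a = card (A - B)"
  define b where "b = card (B - A)"
  define k where "k = card (A \<inter> B)"
  have cA: "card A = a + k"
  proof -
    have "card ((A - B) \<union> (A \<inter> B)) = card (A - B) + card (A \<inter> B)"
      using assms by (intro card_Un_disjoint) auto
    moreover have "(A - B) \<union> (A \<inter> B) = A" by auto
    ultimately show ?thesis by (simp add: a_def k_def)
  qed
  have cB: "card B = b + k"
  proof -
    have "card ((B - A) \<union> (A \<inter> B)) = card (B - A) + card (A \<inter> B)"
      using assms by (intro card_Un_disjoint) auto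
    moreover have "(B - A) \<union> (A \<inter> B) = B" by auto
    ultimately show ?thesis by (simp add: b_def k_def)
  qed
  have cS: "card (sd A B) = a + b" unfolding a_def b_def sd_def using assms
    by (subst card_Un_disjoint) auto
  have ev: "even ((TT (a + b) + ((a + k) * (b + k) + k)) + (TT (a + k) + TT (b + k)))"
  proof -
    have "TT k * 2 = k * (k + 1)" unfolding TT_def by simp
    hence "(TT (a + b) + ((a + k) * (b + k) + k)) + (TT (a + k) + TT (b + k))
      = 2 * (TT a + TT b + 2 * TT k + a * b + a * k + b * k)"
      by (simp add: TT_add algebra_simps)
    thus ?thesis by simp
  qed
  have "(-1) ^ TT (card (sd A B)) * blade_coef s A B
      = (-1) ^ (TT (a + b) + ((a + k) * (b + k) + k)) * blade_coef s B A"
    using blade_coef_swap[OF assms, of s] cA cB cS k_def by (simp add: power_add mult.assoc)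
  also have "\<dots> = (-1) ^ (TT (a + k) + TT (b + k)) * blade_coef s B A"
    by (simp only: neg_one_parity[OF ev])
  finally show ?thesis using cA cB by (simp add: power_add)
qed

lemma bar_mult: "bar (cl_mult n s U V) = cl_mult n s (bar V) (bar U)"
proof
  fix C
  have "bar (cl_mult n s U V) C = (\<Sum>A\<in>PP n. \<Sum>B\<in>PP n. if sd A B = C then U A * V B * ((-1) ^ TT (card (sd A B)) * blade_coef s A B) else 0)"
    unfolding bar_apply cl_mult_sd sum_distrib_left
    by (intro sum.cong refl) (simp add: mult_ac)
  also have "\<dots> = (\<Sum>A\<in>PP n. \<Sum>B\<in>PP n. if sd B A = C then bar V B * bar U A * blade_coef s B A else 0)"
  proof (intro sum.cong refl)
    fix A B assume AB: "A \<in> PP n" "B \<in> PP n"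
    have e: "(-1) ^ TT (card (sd A B)) * blade_coef s A B = (-1) ^ TT (card A) * (-1) ^ TT (card B) * blade_coef s B A"
      using AB by (intro sign_anti) (auto intro: fin_PP)
    have c: "sd B A = sd A B" by (auto simp: sd_def)
    show "(if sd A B = C then U A * V B * ((-1) ^ TT (card (sd A B)) * blade_coef s A B) else 0) =
      (if sd B A = C then bar V B * bar U A * blade_coef s B A else 0)"
      unfolding e c by (simp add: bar_apply mult_ac)
  qed
  also have "\<dots> = cl_mult n s (bar V) (bar U) C"
    unfolding cl_mult_sd by (rule sum.swap)
  finally show "bar (cl_mult n s U V) C = cl_mult n s (bar V) (bar U) C" .
qed

lemma bar_one: "bar cl_one = cl_one"
  by (rule ext) (simp add: bar_apply cl_one_def TT_def)

lemma bar_carrier: "U \<in> cl_carrier n \<Longrightarrow> bar U \<in> cl_carrier n"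
  by (simp add: cl_carrier_def bar_apply)



lemma TT_mod4: "(-1::'a::ring_1) ^ TT k = (if k mod 4 = 0 \<or> k mod 4 = 3 then 1 else -1)"
proof -
  define q where "q = k div 4"
  define r where "r = k mod 4"
  have k: "k = 4 * q + r" unfolding q_def r_def by simp
  have r4: "r < 4" unfolding r_def by simp
  have t4: "TT (4 * q) = 2 * (q * (4 * q + 1))" unfolding TT_def by simp
  have "TT k = TT r + 2 * (q * (4 * q + 1) + 2 * q * r)" unfolding k TT_add t4 by simp
  hence "(-1::'a) ^ TT k = (-1) ^ TT r" by (simp add: power_add power_mult)
  moreover have "r = 0 \<or> r = 1 \<or> r = 2 \<or> r = 3" using r4 by auto
  ultimately show ?thesis unfolding r_def[symmetric] by (auto simp: TT_def)
qed

lemma grades03: "(U::nat set \<Rightarrow> 'a::field_char_0) \<in> cl_grades_mod4 n 0 3 \<longleftrightarrow> U \<in> cl_carrier n \<and> bar U = U"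
proof -
  have "bar U = U \<longleftrightarrow> (\<forall>A. U A \<noteq> 0 \<longrightarrow> card A mod 4 = 0 \<or> card A mod 4 = 3)"
    unfolding fun_eq_iff bar_apply TT_mod4 by (auto simp: minus_equation_iff[of "U _"] split: if_splits)
  thus ?thesis unfolding cl_grades_mod4_def by auto
qed

lemma grades12: "(U::nat set \<Rightarrow> 'a::field_char_0) \<in> cl_grades_mod4 n 1 2 \<longleftrightarrow> U \<in> cl_carrier n \<and> bar U = (\<lambda>A. - U A)"
proof -
  have m: "card A mod 4 = 0 \<or> card A mod 4 = 3 \<longleftrightarrow> \<not> (card A mod 4 = 1 \<or> card A mod 4 = 2)" for A by auto
  have "bar U = (\<lambda>A. - U A) \<longleftrightarrow> (\<forall>A. U A \<noteq> 0 \<longrightarrow> card A mod 4 = 1 \<or> card A mod 4 = 2)"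
    unfolding fun_eq_iff bar_apply TT_mod4 by (auto simp: m split: if_splits)
  thus ?thesis unfolding cl_grades_mod4_def by auto
qed

lemma units_inv: assumes "T \<in> cl_units n s"
  shows "cl_inv n s T \<in> cl_carrier n" "cl_mult n s T (cl_inv n s T) = cl_one" "cl_mult n s (cl_inv n s T) T = cl_one"
proof -
  have "\<exists>V. V \<in> cl_carrier n \<and> cl_mult n s T V = cl_one \<and> cl_mult n s V T = cl_one"
    using assms unfolding cl_units_def by blast
  from someI_ex[OF this] show "cl_inv n s T \<in> cl_carrier n" "cl_mult n s T (cl_inv n s T) = cl_one" "cl_mult n s (cl_inv n s T) T = cl_one"
    unfolding cl_inv_def by auto
qed

definition bl :: "nat set \<Rightarrow> nat set \<Rightarrow> 'a::field" where "bl A = (\<lambda>C. if C = A then 1 else 0)"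

lemma bl_carrier: "A \<subseteq> {..<n} \<Longrightarrow> bl A \<in> cl_carrier n" by (simp add: bl_def cl_carrier_def)

lemma sd_eq_iff1: "sd A B = C \<longleftrightarrow> B = sd A C" by (auto simp: sd_def)
lemma sd_eq_iff2: "sd B A = C \<longleftrightarrow> B = sd A C" by (auto simp: sd_def)

lemma bl_left: assumes "A \<in> PP n" "W \<in> cl_carrier n"
  shows "cl_mult n s (bl A) W C = W (sd A C) * blade_coef s A (sd A C)"
proof -
  have "cl_mult n s (bl A) W C = (\<Sum>A'\<in>PP n. if A' = A then (\<Sum>B\<in>PP n. if B = sd A C then W B * blade_coef s A B else 0) else 0)"
    unfolding cl_mult_sd
  proof (rule sum.cong[OF refl])
    fix A'
    show "(\<Sum>B\<in>PP n. if sd A' B = C then bl A A' * W B * blade_coef s A' B else 0) =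
      (if A' = A then (\<Sum>B\<in>PP n. if B = sd A C then W B * blade_coef s A B else 0) else 0)"
    proof (cases "A' = A")
      case True thus ?thesis by (simp only: True if_True, intro sum.cong refl) (simp add: bl_def sd_eq_iff1)
    next
      case False thus ?thesis by (simp, intro sum.neutral) (simp add: bl_def)
    qed
  qed
  also have "\<dots> = W (sd A C) * blade_coef s A (sd A C)"
    using assms carrier_out[OF assms(2), of "sd A C"] by (simp add: sum.delta')
  finally show ?thesis .
qed

lemma bl_right: assumes "A \<in> PP n" "W \<in> cl_carrier n"
  shows "cl_mult n s W (bl A) C = W (sd A C) * blade_coef s (sd A C) A"
proof -
  have "cl_mult n s W (bl A) C = (\<Sum>A'\<in>PP n. if A' = sd A C then W A' * blade_coef s A' A else 0)"
    unfolding cl_mult_sd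
  proof (rule sum.cong[OF refl])
    fix A'
    have "(\<Sum>B\<in>PP n. if sd A' B = C then W A' * bl A B * blade_coef s A' B else 0) =
      (\<Sum>B\<in>PP n. if B = A then (if A' = sd A C then W A' * blade_coef s A' A else 0) else 0)"
      by (rule sum.cong[OF refl]) (auto simp: bl_def sd_eq_iff2)
    thus "(\<Sum>B\<in>PP n. if sd A' B = C then W A' * bl A B * blade_coef s A' B else 0) =
      (if A' = sd A C then W A' * blade_coef s A' A else 0)" using assms by simp
  qed
  also have "\<dots> = W (sd A C) * blade_coef s (sd A C) A"
    using assms carrier_out[OF assms(2), of "sd A C"] by (simp add: sum.delta')
  finally show ?thesis .
qed

lemma blade_coef_nz: assumes "\<forall>i. s i \<noteq> 0" shows "blade_coef s A B \<noteq> (0::'a::field)"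
proof -
  have "prod s (A \<inter> B) \<noteq> 0" using assms by (cases "finite (A \<inter> B)") (auto simp: prod_zero_iff)
  thus ?thesis unfolding blade_coef_def by simp
qed

lemma commute_parity:
  fixes W :: "nat set \<Rightarrow> 'a::field_char_0"
  assumes s: "\<forall>i. s i \<noteq> 0" and A: "A \<in> PP n" and W: "W \<in> cl_carrier n"
    and comm: "cl_mult n s (bl A) W = cl_mult n s W (bl A)" and nz: "W B \<noteq> 0"
  shows "even (card A * card B + card (A \<inter> B))"
proof (rule ccontr)
  assume od: "\<not> ?thesis"
  have B: "B \<subseteq> {..<n}" using W nz unfolding cl_carrier_def by blast
  have sdB: "sd A (sd A B) = B" by (auto simp: sd_def)
  have "W B * blade_coef s A B = W B * blade_coef s B A"
    using fun_cong[OF comm, of "sd A B"] bl_left[OF A W] bl_right[OF A W] sdB by simp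
  hence e: "blade_coef s A B = blade_coef s B A" using nz by simp
  have "blade_coef s A B = - blade_coef s B A"
    using blade_coef_swap[of A B s] A B od by (auto intro: fin_PP finite_subset simp: neg_one_odd_power)
  hence "blade_coef s B A = 0" using e by simp
  thus False using blade_coef_nz[OF s] by blast
qed

lemma center_commute:
  assumes "z \<in> cl_center n"
  shows "cl_mult n s z U = cl_mult n s U z"
proof
  fix C
  have "cl_mult n s z U C = (\<Sum>A\<in>PP n. \<Sum>B\<in>PP n. if sd B A = C then U B * z A * blade_coef s B A else 0)"
    unfolding cl_mult_sd
  proof (intro sum.cong refl)
    fix A B assume AB: "A \<in> PP n" "B \<in> PP n"
    have c: "sd B A = sd A B" by (auto simp: sd_def)
    have "z A * blade_coef s A B = z A * blade_coef s B A"
    proof (cases "z A = 0")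
      case False
      hence "A = {} \<or> (odd n \<and> A = {..<n})" using assms unfolding cl_center_def by blast
      thus ?thesis
      proof
        assume "A = {}" thus ?thesis by simp
      next
        assume o: "odd n \<and> A = {..<n}"
        hence "A \<inter> B = B" using AB by auto
        hence "card A * card B + card (A \<inter> B) = (n + 1) * card B" using o by simp
        moreover have "even ((n + 1) * card B)" using o by simp
        ultimately show ?thesis using blade_coef_swap[of A B s] AB
          by (auto intro: fin_PP simp: neg_one_even_power)
      qed
    qed simp
    thus "(if sd A B = C then z A * U B * blade_coef s A B else 0) =
      (if sd B A = C then U B * z A * blade_coef s B A else 0)"
      unfolding c by (simp add: mult_ac)
  qed
  also have "\<dots> = cl_mult n s U z C" unfolding cl_mult_sd by (rule sum.swap)
  finally show "cl_mult n s z U C = cl_mult n s U z C" .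
qed



lemma two_elems: assumes "finite R" "2 \<le> card R" obtains x y where "x \<in> R" "y \<in> R" "x \<noteq> y"
proof -
  have "R \<noteq> {}" using assms by auto
  then obtain x where x: "x \<in> R" by auto
  have "card (R - {x}) \<ge> 1" using assms x by simp
  hence "R - {x} \<noteq> {}" by (intro notI) simp
  then obtain y where "y \<in> R - {x}" by auto
  thus ?thesis using that x by auto
qed

lemma center1:
  assumes z: "z \<in> cl_carrier n"
    and h: "\<And>a B. a < n \<Longrightarrow> z B \<noteq> 0 \<Longrightarrow> even (card B + (if a \<in> B then 1 else 0))"
  shows "z \<in> cl_center n"
  unfolding cl_center_def
proof (intro CollectI conjI z allI impI)
  fix B assume nz: "z B \<noteq> 0"
  have Bs: "B \<subseteq> {..<n}" using z nz unfolding cl_carrier_def by blast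
  show "B = {} \<or> odd n \<and> B = {..<n}"
  proof (cases "B = {}")
    case False
    then obtain b where b: "b \<in> B" by auto
    hence ob: "odd (card B)" using h[of b B] Bs nz by auto
    show ?thesis
    proof (cases "B = {..<n}")
      case True thus ?thesis using ob by simp
    next
      case False
      then obtain c where "c < n" "c \<notin> B" using Bs by auto
      hence "even (card B)" using h[of c B] nz by auto
      thus ?thesis using ob by simp
    qed
  qed simp
qed

lemma center3:
  assumes z: "z \<in> cl_carrier n" and n4: "4 \<le> n"
    and h: "\<And>A B. A \<subseteq> {..<n} \<Longrightarrow> card A = 3 \<Longrightarrow> z B \<noteq> 0 \<Longrightarrow> even (3 * card B + card (A \<inter> B))"
  shows "z \<in> cl_center n"
  unfolding cl_center_def
proof (intro CollectI conjI z allI impI)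
  fix B assume nz: "z B \<noteq> 0"
  have Bs: "B \<subseteq> {..<n}" using z nz unfolding cl_carrier_def by blast
  have finB: "finite B" using Bs finite_subset by blast
  show "B = {} \<or> odd n \<and> B = {..<n}"
  proof (cases "B = {}")
    case False
    then obtain b where b: "b \<in> B" by auto
    show ?thesis
    proof (cases "B = {..<n}")
      case True
      let ?A = "{0,1,2::nat}"
      have "?A \<subseteq> {..<n}" using n4 by auto
      moreover have "card ?A = 3" by simp
      ultimately have "even (3 * card B + card (?A \<inter> B))" using h nz by blast
      moreover have "?A \<inter> B = ?A" using True n4 by auto
      ultimately have "even (3 * n + 3)" using True by simp
      thus ?thesis using True by simp
    next
      case False
      then obtain c where c: "c < n" "c \<notin> B" using Bs by auto
      have bc: "b \<noteq> c" using b c by auto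
      let ?R = "{..<n} - {b, c}"
      have "card ?R = n - 2" using b c Bs bc by (subst card_Diff_subset) auto
      hence "2 \<le> card ?R" using n4 by simp
      then obtain x y where xy: "x \<in> ?R" "y \<in> ?R" "x \<noteq> y" using two_elems by blast
      let ?A1 = "{b, x, y}" and ?A2 = "{c, x, y}"
      have s1: "?A1 \<subseteq> {..<n}" "card ?A1 = 3" using xy b Bs by auto
      have s2: "?A2 \<subseteq> {..<n}" "card ?A2 = 3" using xy c by auto
      have i1: "?A1 \<inter> B = insert b ({x, y} \<inter> B)" using b by auto
      have i2: "?A2 \<inter> B = {x, y} \<inter> B" using c by auto
      have "card (?A1 \<inter> B) = Suc (card ({x, y} \<inter> B))" unfolding i1 using xy by (subst card_insert_disjoint) auto
      moreover have "even (3 * card B + card (?A1 \<inter> B))" using h[OF s1 nz] .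
      moreover have "even (3 * card B + card (?A2 \<inter> B))" using h[OF s2 nz] .
      ultimately show ?thesis unfolding i2 by simp
    qed
  qed simp
qed



lemma mult_scal_left: "cl_mult n s (\<lambda>A. c * U A) V = (\<lambda>C. c * cl_mult n s U V C)"
  unfolding cl_mult_sd by (rule ext) (simp add: sum_distrib_left mult_ac if_distrib cong: if_cong)

lemma mult_scal_right: "cl_mult n s U (\<lambda>A. c * V A) = (\<lambda>C. c * cl_mult n s U V C)"
  unfolding cl_mult_sd by (rule ext) (simp add: sum_distrib_left mult_ac if_distrib cong: if_cong)

lemma units_carrier: "T \<in> cl_units n s \<Longrightarrow> T \<in> cl_carrier n" by (simp add: cl_units_def)

lemma B_preserves:
  fixes T U :: "nat set \<Rightarrow> 'a::field"
  assumes T: "T \<in> cl_B n s" and U: "U \<in> cl_carrier n" and bU: "bar U = (\<lambda>A. c * U A)"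
  shows "bar (cl_mult n s (cl_mult n s T U) (cl_inv n s T)) = (\<lambda>A. c * cl_mult n s (cl_mult n s T U) (cl_inv n s T) A)"
proof -
  let ?M = "cl_mult n s"
  define Ti where "Ti = cl_inv n s T"
  define z where "z = ?M (bar T) T"
  have Tu: "T \<in> cl_units n s" and zc: "z \<in> cl_center_units n s" using T unfolding cl_B_def z_def bar_def by auto
  have Tc: "T \<in> cl_carrier n" using Tu by (rule units_carrier)
  have Tic: "Ti \<in> cl_carrier n" and TTi: "?M T Ti = cl_one" and TiT: "?M Ti T = cl_one"
    using units_inv[OF Tu] unfolding Ti_def by auto
  have zcen: "z \<in> cl_center n" using zc unfolding cl_center_units_def by auto
  obtain zi where zi: "zi \<in> cl_carrier n" "?M z zi = cl_one" "?M zi z = cl_one"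
    using zc unfolding cl_center_units_def cl_units_def by auto
  have bTc: "bar T \<in> cl_carrier n" using Tc by (rule bar_carrier)
  have bTic: "bar Ti \<in> cl_carrier n" using Tic by (rule bar_carrier)
  have h1: "?M (bar Ti) (bar T) = cl_one" using TTi bar_mult[of n s T Ti] bar_one by metis
  have h2: "?M z Ti = bar T" unfolding z_def cl_mult_assoc TTi using cl_one_right[OF bTc] .
  have h3: "?M (bar T) (?M T zi) = cl_one"
    unfolding h2[symmetric] cl_mult_assoc
    using TiT zi(2) cl_one_left[OF cl_mult_carrier[of n s zi]] 
    by (metis cl_mult_assoc cl_one_left zi(1))
  have h4: "bar Ti = ?M T zi"
  proof -
    have "bar Ti = ?M (bar Ti) (?M (bar T) (?M T zi))" using h3 cl_one_right[OF bTic] by simp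
    also have "\<dots> = ?M T zi" using h1 cl_one_left[OF Tc] by (simp add: cl_mult_assoc[symmetric])
    finally show ?thesis .
  qed
  have comm: "?M U z = ?M z U" using center_commute[OF zcen] by simp
  have "bar (?M (?M T U) Ti) = ?M (bar Ti) (?M (bar U) (bar T))" by (simp add: bar_mult cl_mult_assoc)
  also have "\<dots> = ?M (?M T zi) (?M (\<lambda>A. c * U A) (?M z Ti))" using h2 h4 bU by simp
  also have "\<dots> = (\<lambda>A. c * ?M (?M T zi) (?M (?M U z) Ti) A)"
    by (simp add: mult_scal_left mult_scal_right cl_mult_assoc)
  also have "?M (?M T zi) (?M (?M U z) Ti) = ?M T (?M (?M zi z) (?M U Ti))"
    unfolding comm by (simp add: cl_mult_assoc)
  also have "\<dots> = ?M (?M T U) Ti" using zi(3) cl_one_left[OF cl_mult_carrier[of n s U Ti]] by (simp add: cl_mult_assoc)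
  finally show ?thesis unfolding Ti_def .
qed



lemma conj_commute:
  fixes T e :: "nat set \<Rightarrow> 'a::field"
  assumes Tu: "T \<in> cl_units n s" and ec: "e \<in> cl_carrier n" and be: "bar e = (\<lambda>A. c * e A)" and c: "c \<noteq> 0"
    and bX: "bar (cl_mult n s (cl_mult n s T e) (cl_inv n s T)) = (\<lambda>A. c * cl_mult n s (cl_mult n s T e) (cl_inv n s T) A)"
  shows "cl_mult n s e (cl_mult n s (bar T) T) = cl_mult n s (cl_mult n s (bar T) T) e"
proof -
  let ?M = "cl_mult n s"
  define Ti where "Ti = cl_inv n s T"
  have Tc: "T \<in> cl_carrier n" using Tu by (rule units_carrier)
  have Tic: "Ti \<in> cl_carrier n" and TTi: "?M T Ti = cl_one" and TiT: "?M Ti T = cl_one"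
    using units_inv[OF Tu] unfolding Ti_def by auto
  have bTc: "bar T \<in> cl_carrier n" using Tc by (rule bar_carrier)
  have h1': "?M (bar T) (bar Ti) = cl_one" using TiT bar_mult[of n s Ti T] bar_one by metis
  have "(\<lambda>C. c * ?M (bar Ti) (?M e (bar T)) C) = bar (?M (?M T e) Ti)"
    by (simp add: bar_mult be mult_scal_left mult_scal_right)
  also have "\<dots> = (\<lambda>A. c * ?M (?M T e) Ti A)" using bX unfolding Ti_def .
  finally have H: "?M (bar Ti) (?M e (bar T)) = ?M (?M T e) Ti"
    using c by (auto simp: fun_eq_iff)
  have "?M (bar T) (?M (?M (?M T e) Ti) T) = ?M (?M (bar T) T) e"
    using TiT cl_one_right[OF ec] by (simp add: cl_mult_assoc)
  moreover have "?M (bar T) (?M (?M (bar Ti) (?M e (bar T))) T) = ?M e (?M (bar T) T)"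
  proof -
    have "?M (bar T) (?M (?M (bar Ti) (?M e (bar T))) T) = ?M (?M (bar T) (bar Ti)) (?M e (?M (bar T) T))"
      by (simp add: cl_mult_assoc)
    also have "\<dots> = ?M e (?M (bar T) T)" unfolding h1' by (rule cl_one_left[OF cl_mult_carrier])
    finally show ?thesis .
  qed
  ultimately show ?thesis using H by simp
qed

lemma z_units:
  assumes Tu: "T \<in> cl_units n s"
  shows "cl_mult n s (bar T) T \<in> cl_units n s"
proof -
  let ?M = "cl_mult n s"
  define Ti where "Ti = cl_inv n s T"
  have Tc: "T \<in> cl_carrier n" using Tu by (rule units_carrier)
  have Tic: "Ti \<in> cl_carrier n" and TTi: "?M T Ti = cl_one" and TiT: "?M Ti T = cl_one"
    using units_inv[OF Tu] unfolding Ti_def by auto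
  have bTic: "bar Ti \<in> cl_carrier n" using Tic by (rule bar_carrier)
  have h1: "?M (bar Ti) (bar T) = cl_one" using TTi bar_mult[of n s T Ti] bar_one by metis
  have h1': "?M (bar T) (bar Ti) = cl_one" using TiT bar_mult[of n s Ti T] bar_one by metis
  have a: "?M (?M (bar T) T) (?M Ti (bar Ti)) = cl_one"
  proof -
    have "?M (?M (bar T) T) (?M Ti (bar Ti)) = ?M (bar T) (?M (?M T Ti) (bar Ti))" by (simp add: cl_mult_assoc)
    also have "\<dots> = cl_one" unfolding TTi cl_one_left[OF bTic] h1' ..
    finally show ?thesis .
  qed
  have b: "?M (?M Ti (bar Ti)) (?M (bar T) T) = cl_one"
  proof -
    have "?M (?M Ti (bar Ti)) (?M (bar T) T) = ?M Ti (?M (?M (bar Ti) (bar T)) T)" by (simp add: cl_mult_assoc)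
    also have "\<dots> = cl_one" unfolding h1 cl_one_left[OF Tc] TiT ..
    finally show ?thesis .
  qed
  show ?thesis unfolding cl_units_def using a b cl_mult_carrier by blast
qed

lemma bar_bl1: "bar (bl {a}) = (\<lambda>A. - (bl {a} A :: 'a::field))"
  by (rule ext) (simp add: bar_apply bl_def TT_def)

lemma bar_bl3: assumes "card A = 3" shows "bar (bl A) = (\<lambda>A'. 1 * (bl A A' :: 'a::field))"
  using assms by (intro ext) (simp add: bar_apply bl_def TT_def)



lemma B_sub_Gamma03:
  fixes s :: "nat \<Rightarrow> 'a::field_char_0"
  shows "cl_B n s \<subseteq> cl_Gamma n s (cl_grades_mod4 n 0 3)"
proof
  fix T assume T: "T \<in> cl_B n s"
  have Tu: "T \<in> cl_units n s" using T unfolding cl_B_def by auto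
  show "T \<in> cl_Gamma n s (cl_grades_mod4 n 0 3)"
    unfolding cl_Gamma_def
  proof (intro CollectI conjI Tu ballI)
    fix U :: "nat set \<Rightarrow> 'a" assume "U \<in> cl_grades_mod4 n 0 3"
    hence U: "U \<in> cl_carrier n" "bar U = (\<lambda>A. 1 * U A)" unfolding grades03 by auto
    show "cl_mult n s (cl_mult n s T U) (cl_inv n s T) \<in> cl_grades_mod4 n 0 3"
      unfolding grades03 using B_preserves[OF T U] cl_mult_carrier by simp
  qed
qed

lemma B_sub_Gamma12:
  fixes s :: "nat \<Rightarrow> 'a::field_char_0"
  shows "cl_B n s \<subseteq> cl_Gamma n s (cl_grades_mod4 n 1 2)"
proof
  fix T assume T: "T \<in> cl_B n s"
  have Tu: "T \<in> cl_units n s" using T unfolding cl_B_def by auto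
  show "T \<in> cl_Gamma n s (cl_grades_mod4 n 1 2)"
    unfolding cl_Gamma_def
  proof (intro CollectI conjI Tu ballI)
    fix U :: "nat set \<Rightarrow> 'a" assume "U \<in> cl_grades_mod4 n 1 2"
    hence U: "U \<in> cl_carrier n" "bar U = (\<lambda>A. (-1) * U A)" unfolding grades12 by auto
    show "cl_mult n s (cl_mult n s T U) (cl_inv n s T) \<in> cl_grades_mod4 n 1 2"
      unfolding grades12 using B_preserves[OF T U] cl_mult_carrier by simp
  qed
qed

lemma B_intro:
  assumes "T \<in> cl_units n s" "cl_mult n s (bar T) T \<in> cl_center n"
  shows "T \<in> cl_B n s"
  using assms z_units[OF assms(1)] unfolding cl_B_def cl_center_units_def bar_def by auto

lemma Gamma12_sub_B:
  fixes s :: "nat \<Rightarrow> 'a::field_char_0"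
  assumes s: "\<forall>i. s i \<noteq> 0"
  shows "cl_Gamma n s (cl_grades_mod4 n 1 2) \<subseteq> cl_B n s"
proof
  fix T assume T: "T \<in> cl_Gamma n s (cl_grades_mod4 n 1 2)"
  have Tu: "T \<in> cl_units n s" using T unfolding cl_Gamma_def by auto
  define z where "z = cl_mult n s (bar T) T"
  have zc: "z \<in> cl_carrier n" unfolding z_def by (rule cl_mult_carrier)
  have "z \<in> cl_center n"
  proof (rule center1[OF zc])
    fix a B assume a: "a < n" and nz: "z B \<noteq> 0"
    have ec: "(bl {a} :: nat set \<Rightarrow> 'a) \<in> cl_carrier n" using a by (intro bl_carrier) auto
    have "(bl {a} :: nat set \<Rightarrow> 'a) \<in> cl_grades_mod4 n 1 2" unfolding grades12 using ec bar_bl1 by auto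
    hence "cl_mult n s (cl_mult n s T (bl {a})) (cl_inv n s T) \<in> cl_grades_mod4 n 1 2"
      using T unfolding cl_Gamma_def by auto
    hence bX: "bar (cl_mult n s (cl_mult n s T (bl {a})) (cl_inv n s T)) =
       (\<lambda>A. (-1) * cl_mult n s (cl_mult n s T (bl {a})) (cl_inv n s T) A)"
      unfolding grades12 by simp
    have be: "bar (bl {a}) = (\<lambda>A. (-1) * (bl {a} A :: 'a))" using bar_bl1 by simp
    have comm: "cl_mult n s (bl {a}) z = cl_mult n s z (bl {a})"
      using conj_commute[OF Tu ec be _ bX] unfolding z_def by simp
    have "even (card {a} * card B + card ({a} \<inter> B))"
      using commute_parity[OF s _ zc comm nz] a by auto
    moreover have "card ({a} \<inter> B) = (if a \<in> B then 1 else 0)" by auto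
    ultimately show "even (card B + (if a \<in> B then 1 else 0))" by simp
  qed
  thus "T \<in> cl_B n s" using B_intro[OF Tu] unfolding z_def by simp
qed

lemma Gamma03_sub_B:
  fixes s :: "nat \<Rightarrow> 'a::field_char_0"
  assumes s: "\<forall>i. s i \<noteq> 0" and n2: "2 \<le> n"
  shows "cl_Gamma n s (cl_grades_mod4 n 0 3) \<subseteq> cl_B n s"
proof
  fix T assume T: "T \<in> cl_Gamma n s (cl_grades_mod4 n 0 3)"
  have Tu: "T \<in> cl_units n s" using T unfolding cl_Gamma_def by auto
  define z where "z = cl_mult n s (bar T) T"
  have zc: "z \<in> cl_carrier n" unfolding z_def by (rule cl_mult_carrier)
  have "z \<in> cl_center n"
  proof (cases "4 \<le> n")
    case True
    show ?thesis
    proof (rule center3[OF zc True])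
      fix A B assume A: "A \<subseteq> {..<n}" and c3: "card A = 3" and nz: "z B \<noteq> 0"
      have ec: "(bl A :: nat set \<Rightarrow> 'a) \<in> cl_carrier n" using A by (intro bl_carrier)
      have be: "bar (bl A) = (\<lambda>A'. 1 * (bl A A' :: 'a))" using bar_bl3[OF c3] .
      have "(bl A :: nat set \<Rightarrow> 'a) \<in> cl_grades_mod4 n 0 3" unfolding grades03 using ec be by auto
      hence "cl_mult n s (cl_mult n s T (bl A)) (cl_inv n s T) \<in> cl_grades_mod4 n 0 3"
        using T unfolding cl_Gamma_def by auto
      hence bX: "bar (cl_mult n s (cl_mult n s T (bl A)) (cl_inv n s T)) =
         (\<lambda>A'. 1 * cl_mult n s (cl_mult n s T (bl A)) (cl_inv n s T) A')"
        unfolding grades03 by simp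
      have comm: "cl_mult n s (bl A) z = cl_mult n s z (bl A)"
        using conj_commute[OF Tu ec be _ bX] unfolding z_def by simp
      show "even (3 * card B + card (A \<inter> B))"
        using commute_parity[OF s _ zc comm nz] A c3 by auto
    qed
  next
    case False
    have bz: "bar z = z" unfolding z_def by (simp add: bar_mult bar_bar)
    show ?thesis unfolding cl_center_def
    proof (intro CollectI conjI zc allI impI)
      fix B assume nz: "z B \<noteq> 0"
      have Bs: "B \<subseteq> {..<n}" using zc nz unfolding cl_carrier_def by blast
      have cB: "card B \<le> n" using card_mono[OF _ Bs] by simp
      have "z \<in> cl_grades_mod4 n 0 3" unfolding grades03 using zc bz by simp
      hence m: "card B mod 4 = 0 \<or> card B mod 4 = 3" using nz unfolding cl_grades_mod4_def by auto
      have "card B = 0 \<or> card B = 3" using m cB False by auto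
      thus "B = {} \<or> odd n \<and> B = {..<n}"
      proof
        assume "card B = 0"
        moreover have "finite B" using Bs finite_subset by blast
        ultimately show ?thesis by simp
      next
        assume c3: "card B = 3"
        hence n3: "n = 3" using cB False by simp
        have "B = {..<n}" using card_subset_eq[OF _ Bs] c3 n3 by simp
        thus ?thesis using n3 by simp
      qed
    qed
  qed
  thus "T \<in> cl_B n s" using B_intro[OF Tu] unfolding z_def by simp
qed

lemma main_generic:
  fixes s :: "nat \<Rightarrow> 'a::field_char_0"
  assumes s: "\<forall>i. s i \<noteq> 0" and n2: "2 \<le> n"
  shows "cl_B n s = cl_Gamma n s (cl_grades_mod4 n 0 3) \<and>
         cl_Gamma n s (cl_grades_mod4 n 0 3) = cl_Gamma n s (cl_grades_mod4 n 1 2)"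
  using B_sub_Gamma03[of n s] B_sub_Gamma12[of n s] Gamma12_sub_B[OF s, of n] Gamma03_sub_B[OF s n2]
  by blast

theorem mainTheorem8:
  shows "(\<forall>p q. p + q \<ge> 2 \<longrightarrow>
           (let n = p + q; s = real_sig p in
             cl_B n s = cl_Gamma n s (cl_grades_mod4 n 0 3) \<and>
             cl_Gamma n s (cl_grades_mod4 n 0 3) = cl_Gamma n s (cl_grades_mod4 n 1 2)))
       \<and> (\<forall>n::nat. n \<ge> 2 \<longrightarrow>
           cl_B n complex_sig = cl_Gamma n complex_sig (cl_grades_mod4 n 0 3) \<and>
           cl_Gamma n complex_sig (cl_grades_mod4 n 0 3) = cl_Gamma n complex_sig (cl_grades_mod4 n 1 2))"
proof -
  have r: "cl_B (p + q) (real_sig p) = cl_Gamma (p + q) (real_sig p) (cl_grades_mod4 (p + q) 0 3) \<and>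
      cl_Gamma (p + q) (real_sig p) (cl_grades_mod4 (p + q) 0 3) = cl_Gamma (p + q) (real_sig p) (cl_grades_mod4 (p + q) 1 2)"
    if "p + q \<ge> 2" for p q
    by (rule main_generic) (simp_all add: real_sig_def that)
  have c: "cl_B n complex_sig = cl_Gamma n complex_sig (cl_grades_mod4 n 0 3) \<and>
      cl_Gamma n complex_sig (cl_grades_mod4 n 0 3) = cl_Gamma n complex_sig (cl_grades_mod4 n 1 2)"
    if "n \<ge> 2" for n
    by (rule main_generic) (simp_all add: complex_sig_def that)
  show ?thesis using r c by (simp add: Let_def)
qed

end
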